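(* Let $N_{\mathsf s}\ge1$ be a fixed integer, $\beta\in(0,\infty)$, and for each integer $N_{\mathsf h}\ge1$ set $N=N_{\mathsf s}N_{\mathsf h}$ and let $K=K_N$ be a positive integer with $K_N/N\to\beta$ as $N_{\mathsf h}\to\infty$. Let $\boldsymbol{S}\in\mathbb{R}^{N\times K}$ have independent columns, each an $(N_{\mathsf s},N_{\mathsf h})$-sequence. Then the normalized rank $r_N:=\frac1N\operatorname{rank}\boldsymbol{S}$ satisfies, in probability, the asymptotic upper bound \[ r\le \min\{\beta,\,1-e^{-N_{\mathsf s}\beta}\}, \] that is, for every $\varepsilon>0$, $\Pr\big(r_N>\min\{\beta,1-e^{-N_{\mathsf s}\beta}\}+\varepsilon\big)\to0$ as $N\to\infty$.
   Context: An $(N_{\mathsf s},N_{\mathsf h})$-sequence is a random vector $\boldsymbol{s}\in\mathbb{R}^N$, $N=N_{\mathsf s}N_{\mathsf h}$, such that for each $m=1,\dots,N_{\mathsf s}$ the block $(s_{1+(m-1)N_{\mathsf h}},\dots,s_{mN_{\mathsf h}})$ has exactly one nonzero entry, whose position within the block is uniform and whose value is $\pm1/\sqrt{N_{\mathsf s}}$ with equal probability, all these choices being independent across blocks (so $\|\boldsymbol{s}\|=1$). *)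

theory Defs
  imports "HOL-Probability.Probability" "Jordan_Normal_Form.DL_Rank"
begin

definition mrank :: "nat \<Rightarrow> real mat \<Rightarrow> nat" where
  "mrank Nrow A = vec_space.rank Nrow A"

text \<open>Raw randomness of one (Ns,Nh)-sequence: for each block m < Ns, a uniformly chosen
  position p in {0..<Nh} and an independent uniform sign (True = +, False = -);
  blocks are independent.\<close>
definition seq_choice_pmf :: "nat \<Rightarrow> nat \<Rightarrow> (nat \<Rightarrow> nat \<times> bool) pmf" where
  "seq_choice_pmf Ns Nh = Pi_pmf {..<Ns} (0, True) (\<lambda>_. pmf_of_set ({..<Nh} \<times> UNIV))"

text \<open>The vector in R^N, N = Ns*Nh (0-based indices), determined by the choices:
  entry i = m*Nh + p is \<plusminus>1/sqrt Ns if p is the chosen position in block m, else 0.\<close>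
definition seq_vec :: "nat \<Rightarrow> nat \<Rightarrow> (nat \<Rightarrow> nat \<times> bool) \<Rightarrow> real vec" where
  "seq_vec Ns Nh c = vec (Ns * Nh) (\<lambda>i.
      if i mod Nh = fst (c (i div Nh))
      then (if snd (c (i div Nh)) then 1 else -1) / sqrt (real Ns) else 0)"

definition seq_pmf :: "nat \<Rightarrow> nat \<Rightarrow> real vec pmf" where
  "seq_pmf Ns Nh = map_pmf (seq_vec Ns Nh) (seq_choice_pmf Ns Nh)"

definition seq_matrix_pmf :: "nat \<Rightarrow> nat \<Rightarrow> nat \<Rightarrow> real mat pmf" where
  "seq_matrix_pmf Ns Nh K =
     map_pmf (\<lambda>cs. mat (Ns * Nh) K (\<lambda>(i, j). cs j $ i))
       (Pi_pmf {..<K} (0\<^sub>v (Ns * Nh)) (\<lambda>_. seq_pmf Ns Nh))"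

end

theory Submission imports Defs "HOL-Real_Asymp.Real_Asymp" begin
definition rowsel :: "nat \<Rightarrow> nat \<Rightarrow> real mat \<Rightarrow> nat set \<Rightarrow> real mat" where
  "rowsel n nc A T = mat n nc (\<lambda>(r,c). if r \<in> T then A $$ (r,c) else 0)"

lemma rank_rowsel:
  assumes "finite T"
  shows "vec_space.rank n (rowsel n nc A T) \<le> card T"
  using assms
proof (induction T rule: finite_induct)
  case empty
  have "rowsel n nc A {} = 0\<^sub>m n nc" by (auto simp: rowsel_def)
  then show ?case by (simp add: vec_space.rank_0I)
next
  case (insert i T)
  have eq: "rowsel n nc A (insert i T) = rowsel n nc A T + rowsel n nc A {i}"
    using insert.hyps by (auto simp: rowsel_def)
  have "vec_space.rank n (rowsel n nc A {i}) \<le> 1"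
    by (rule vec_space.rank_le_1_product_entries[where f="\<lambda>r. if r = i then 1 else 0"
          and g="\<lambda>c. A $$ (i,c)" and nc=nc]) (auto simp: rowsel_def)
  moreover have "vec_space.rank n (rowsel n nc A (insert i T)) \<le>
     vec_space.rank n (rowsel n nc A T) + vec_space.rank n (rowsel n nc A {i})"
    unfolding eq by (rule vec_space.rank_subadditive) (auto simp: rowsel_def)
  ultimately show ?case using insert by simp
qed

lemma rank_le_nonzero_rows:
  assumes "A \<in> carrier_mat n nc" and "R \<subseteq> {..<n}"
    and "\<And>r c. r < n \<Longrightarrow> c < nc \<Longrightarrow> r \<notin> R \<Longrightarrow> A $$ (r,c) = 0"
  shows "mrank n A \<le> card R"
proof -
  have "A = rowsel n nc A R"
    using assms by (auto simp: rowsel_def intro!: eq_matI)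
  then show ?thesis unfolding mrank_def using rank_rowsel[of R n nc A] assms(2)
    by (metis finite_nat_iff_bounded)
qed

lemma rank_le_cols:
  assumes "A \<in> carrier_mat n nc"
  shows "mrank n A \<le> nc"
  unfolding mrank_def using vec_space.rank_le_nc[OF assms] .

definition zrow :: "nat \<Rightarrow> nat \<Rightarrow> real mat set" where
  "zrow K a = {S. \<forall>j<K. S $$ (a,j) = 0}"

lemma seq_vec_zero_iff:
  assumes "i < Ns*Nh" "Ns \<ge> 1"
  shows "seq_vec Ns Nh c $ i = 0 \<longleftrightarrow> i mod Nh \<noteq> fst (c (i div Nh))"
  using assms by (auto simp: seq_vec_def)

lemma unif_prob:
  assumes "P \<subseteq> {..<Nh}" "Nh \<ge> 1"
  shows "measure_pmf.prob (pmf_of_set ({..<Nh} \<times> (UNIV::bool set))) {x. fst x \<notin> P}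
         = (real Nh - real (card P)) / real Nh"
proof -
  have "(0, True) \<in> {..<Nh} \<times> (UNIV::bool set)" using assms(2) by simp
  then have ne: "{..<Nh} \<times> (UNIV::bool set) \<noteq> {}" by blast
  have fin: "finite ({..<Nh} \<times> (UNIV::bool set))" by simp
  have finP: "finite P" using assms(1) finite_subset by blast
  have cP: "card P \<le> Nh" using card_mono[OF _ assms(1)] by simp
  have "({..<Nh} \<times> (UNIV::bool set)) \<inter> {x. fst x \<notin> P} = ({..<Nh} - P) \<times> UNIV" by auto
  moreover have "card (({..<Nh} - P) \<times> (UNIV::bool set)) = (Nh - card P) * 2"
    using assms finP by (simp add: card_cartesian_product card_Diff_subset)
  moreover have "card ({..<Nh} \<times> (UNIV::bool set)) = Nh * 2" by (simp add: card_cartesian_product)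
  moreover have "real Nh \<noteq> 0" using assms by simp
  ultimately show ?thesis using assms cP
    by (simp add: measure_pmf_of_set[OF ne fin] of_nat_diff) (simp add: field_simps)
qed

definition Pset :: "nat \<Rightarrow> nat \<Rightarrow> nat \<Rightarrow> nat \<Rightarrow> nat \<Rightarrow> nat set" where
  "Pset ma pa mb pb m = (if m = ma then {pa} else {}) \<union> (if m = mb then {pb} else {})"

lemma choice_prob:
  assumes "Nh \<ge> 1" "ma < Ns" "mb < Ns" "pa < Nh" "pb < Nh"
  shows "measure_pmf.prob (seq_choice_pmf Ns Nh) {c. fst (c ma) \<noteq> pa \<and> fst (c mb) \<noteq> pb} =
     (\<Prod>m<Ns. (real Nh - real (card (Pset ma pa mb pb m))) / real Nh)"
proof -
  have eq: "{c. fst (c ma) \<noteq> pa \<and> fst (c mb) \<noteq> pb} =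
        Pi {..<Ns} (\<lambda>m. {x. fst x \<notin> Pset ma pa mb pb m})"
    using assms by (auto simp: Pset_def Pi_def split: if_splits)
  have "measure_pmf.prob (seq_choice_pmf Ns Nh) {c. fst (c ma) \<noteq> pa \<and> fst (c mb) \<noteq> pb} =
     (\<Prod>m<Ns. measure_pmf.prob (pmf_of_set ({..<Nh} \<times> (UNIV::bool set))) {x. fst x \<notin> Pset ma pa mb pb m})"
    unfolding seq_choice_pmf_def eq by (rule measure_Pi_pmf_Pi) simp
  also have "\<dots> = (\<Prod>m<Ns. (real Nh - real (card (Pset ma pa mb pb m))) / real Nh)"
    by (intro prod.cong refl unif_prob) (use assms in \<open>auto simp: Pset_def\<close>)
  finally show ?thesis .
qed

lemma prod_eval:
  fixes h :: "nat \<Rightarrow> real"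
  assumes "ma < Ns" "mb < Ns" "\<And>m. m \<noteq> ma \<Longrightarrow> m \<noteq> mb \<Longrightarrow> h m = 1"
  shows "(\<Prod>m<Ns. h m) = (if ma = mb then h ma else h ma * h mb)"
proof -
  have "(\<Prod>m<Ns. h m) = (\<Prod>m\<in>{ma,mb}. h m)"
    using assms by (intro prod.mono_neutral_right) auto
  then show ?thesis by auto
qed

lemma seq_avoid:
  assumes "Ns \<ge> 1" "Nh \<ge> 1" "a < Ns*Nh" "b < Ns*Nh"
  shows "measure_pmf.prob (seq_pmf Ns Nh) {v. v $ a = 0 \<and> v $ b = 0} =
    (if a = b then 1 - 1/Nh else if a div Nh = b div Nh then 1 - 2/Nh else (1 - 1/Nh)^2)"
proof -
  define ma pa mb pb where "ma = a div Nh" and "pa = a mod Nh" and "mb = b div Nh" and "pb = b mod Nh"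
  have bounds: "ma < Ns" "mb < Ns" "pa < Nh" "pb < Nh"
    using assms by (auto simp: ma_def mb_def pa_def pb_def less_mult_imp_div_less mult.commute)
  have "seq_vec Ns Nh -` {v. v $ a = 0 \<and> v $ b = 0} = {c. fst (c ma) \<noteq> pa \<and> fst (c mb) \<noteq> pb}"
    using seq_vec_zero_iff[OF assms(3,1)] seq_vec_zero_iff[OF assms(4,1)]
    by (auto simp: ma_def mb_def pa_def pb_def)
  hence "measure_pmf.prob (seq_pmf Ns Nh) {v. v $ a = 0 \<and> v $ b = 0} =
     (\<Prod>m<Ns. (real Nh - real (card (Pset ma pa mb pb m))) / real Nh)"
    by (simp add: seq_pmf_def choice_prob[OF assms(2) bounds])
  also have "\<dots> = (if ma = mb then (real Nh - real (card (Pset ma pa mb pb ma))) / real Nh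
       else (real Nh - real (card (Pset ma pa mb pb ma))) / real Nh * 
            ((real Nh - real (card (Pset ma pa mb pb mb))) / real Nh))"
    by (rule prod_eval[OF bounds(1,2)]) (use assms(2) in \<open>auto simp: Pset_def\<close>)
  also have "\<dots> = (if a = b then 1 - 1/Nh else if a div Nh = b div Nh then 1 - 2/Nh else (1 - 1/Nh)^2)"
  proof -
    have a_eq: "a = ma * Nh + pa" and b_eq: "b = mb * Nh + pb"
      by (simp_all add: ma_def mb_def pa_def pb_def)
    show ?thesis
    proof (cases "a = b")
      case True
      then show ?thesis using assms(2) by (simp add: ma_def mb_def pa_def pb_def Pset_def field_simps)
    next
      case False
      show ?thesis
      proof (cases "ma = mb")
        case True
        then have "pa \<noteq> pb" using False a_eq b_eq by auto
        then show ?thesis using True False assms(2) by (simp add: ma_def mb_def Pset_def field_simps)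
      next
        case F2: False
        then show ?thesis using False assms(2)
          by (simp add: ma_def mb_def Pset_def field_simps power2_eq_square)
      qed
    qed
  qed
  finally show ?thesis .
qed

lemma mat_avoid:
  assumes "Ns \<ge> 1" "Nh \<ge> 1" "a < Ns*Nh" "b < Ns*Nh"
  shows "measure_pmf.prob (seq_matrix_pmf Ns Nh K) (zrow K a \<inter> zrow K b) =
    (if a = b then 1 - 1/Nh else if a div Nh = b div Nh then 1 - 2/Nh else (1 - 1/Nh)^2) ^ K"
proof -
  have "(\<lambda>cs. mat (Ns * Nh) K (\<lambda>(i, j). cs j $ i)) -` (zrow K a \<inter> zrow K b) =
     Pi {..<K} (\<lambda>_. {v. v $ a = 0 \<and> v $ b = 0})"
    using assms by (auto simp: zrow_def Pi_def)
  then show ?thesis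
    by (simp add: seq_matrix_pmf_def measure_Pi_pmf_Pi seq_avoid[OF assms])
qed

lemma int_bounded:
  fixes f :: "'a \<Rightarrow> real"
  assumes "\<And>x. \<bar>f x\<bar> \<le> B"
  shows "integrable (measure_pmf p) f"
  by (rule measure_pmf.integrable_const_bound[where B=B]) (use assms in auto)

lemma prob_pair_bound:
  assumes "Ns \<ge> 1" "Nh \<ge> 1" "a < Ns*Nh" "b < Ns*Nh"
  shows "measure_pmf.prob (seq_matrix_pmf Ns Nh K) (zrow K a \<inter> zrow K b)
     \<le> ((1 - 1/real Nh)^K)^2 + (if a = b then (1 - 1/real Nh)^K else 0)"
proof -
  have q0: "0 \<le> 1 - 1/real Nh" using assms(2) by simp
  show ?thesis
  proof (cases "a = b")
    case True
    then show ?thesis using mat_avoid[OF assms] by simp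
  next
    case False
    show ?thesis
    proof (cases "a div Nh = b div Nh")
      case True
      have "a = a div Nh * Nh + a mod Nh" "b = b div Nh * Nh + b mod Nh" by simp_all
      then have md: "a mod Nh \<noteq> b mod Nh" using True False by metis
      have "Nh \<ge> 2"
      proof (rule ccontr)
        assume "\<not> Nh \<ge> 2"
        then have "Nh = 1" using assms(2) by simp
        then show False using md by simp
      qed
      then have h: "0 \<le> 1 - 2 / real Nh" by (simp add: field_simps)
      have "(1 - 1/real Nh)^2 - (1 - 2 / real Nh) = (1/real Nh)^2"
        by (simp add: power2_eq_square algebra_simps)
      then have sq: "1 - 2 / real Nh \<le> (1 - 1/real Nh)^2"
        by (metis diff_ge_0_iff_ge zero_le_power2)
      have "(1 - 2 / real Nh) ^ K \<le> ((1 - 1/real Nh)^2)^K"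
        by (rule power_mono[OF sq h])
      then show ?thesis using mat_avoid[OF assms, of K] True False
        by (simp add: power_mult[symmetric] mult.commute)
    next
      case F2: False
      then show ?thesis using mat_avoid[OF assms, of K] False
        by (simp add: power_mult[symmetric] mult.commute)
    qed
  qed
qed

lemma second_moment:
  fixes K :: nat
  assumes "Ns \<ge> 1" "Nh \<ge> 1"
  defines "N \<equiv> Ns*Nh" and "Q \<equiv> (1-1/real Nh)^K" and "M \<equiv> seq_matrix_pmf Ns Nh K"
    and "Z \<equiv> \<lambda>S. (\<Sum>a<Ns*Nh. indicator (zrow K a) S :: real)"
  shows "measure_pmf.expectation M (\<lambda>S. (Z S - real N * Q)^2) \<le> real N * Q"
proof -
  have Zd: "Z = (\<lambda>S. (\<Sum>a<N. indicator (zrow K a) S))" unfolding Z_def N_def ..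
  have p1: "measure_pmf.prob M (zrow K a) = Q" if "a < N" for a
    using mat_avoid[OF assms(1,2), of a a K] that by (simp add: M_def Q_def N_def)
  have p2: "measure_pmf.prob M (zrow K a \<inter> zrow K b) \<le> Q^2 + (if a = b then Q else 0)"
    if "a < N" "b < N" for a b
    using prob_pair_bound[OF assms(1,2), of a b K] that unfolding M_def Q_def N_def by blast
  have Zb: "0 \<le> Z S \<and> Z S \<le> real N" for S
  proof -
    have "Z S \<le> (\<Sum>a<N. 1)" unfolding Zd by (intro sum_mono) (auto simp: indicator_def)
    moreover have "0 \<le> Z S" unfolding Zd by (intro sum_nonneg) auto
    ultimately show ?thesis by simp
  qed
  have intZ: "integrable M Z" by (rule int_bounded[where B="real N"]) (use Zb in auto)
  have intZ2: "integrable M (\<lambda>S. (Z S)^2)"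
    by (rule int_bounded[where B="real N ^ 2"]) (use Zb in \<open>auto intro: power_mono\<close>)
  have intI: "integrable M (indicator A :: _ \<Rightarrow> real)" for A
    by (rule int_bounded[where B=1]) (auto simp: indicator_def)
  have EZ: "measure_pmf.expectation M Z = real N * Q"
  proof -
    have "measure_pmf.expectation M Z = (\<Sum>a<N. measure_pmf.expectation M (indicator (zrow K a)))"
      unfolding Zd by (rule Bochner_Integration.integral_sum) (rule intI)
    also have "\<dots> = (\<Sum>a<N. Q)" by (intro sum.cong refl) (simp add: p1)
    finally show ?thesis by simp
  qed
  have Z2: "(Z S)^2 = (\<Sum>a<N. \<Sum>b<N. indicator (zrow K a \<inter> zrow K b) S)" for S
    unfolding Zd power2_eq_square sum_product by (simp add: indicator_inter_arith)
  have EZ2: "measure_pmf.expectation M (\<lambda>S. (Z S)^2) \<le> real N * real N * Q^2 + real N * Q"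
  proof -
    have "measure_pmf.expectation M (\<lambda>S. (Z S)^2) =
       (\<Sum>a<N. measure_pmf.expectation M (\<lambda>S. \<Sum>b<N. indicator (zrow K a \<inter> zrow K b) S))"
      unfolding Z2 by (rule Bochner_Integration.integral_sum) (auto intro: intI)
    also have "\<dots> = (\<Sum>a<N. \<Sum>b<N. measure_pmf.prob M (zrow K a \<inter> zrow K b))"
      by (intro sum.cong refl, subst Bochner_Integration.integral_sum) (auto intro: intI)
    also have "\<dots> \<le> (\<Sum>a<N. \<Sum>b<N. Q^2 + (if a = b then Q else 0))"
      by (intro sum_mono p2) auto
    also have "\<dots> = real N * real N * Q^2 + real N * Q"
      by (simp add: sum.distrib algebra_simps)
    finally show ?thesis .
  qed
  have "measure_pmf.expectation M (\<lambda>S. (Z S - real N * Q)^2) =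
     measure_pmf.expectation M (\<lambda>S. (Z S)^2 - 2 * (real N * Q) * Z S + (real N * Q)^2)"
    by (intro Bochner_Integration.integral_cong refl) (simp add: power2_diff algebra_simps)
  also have "\<dots> = measure_pmf.expectation M (\<lambda>S. (Z S)^2) - 2 * (real N * Q) * measure_pmf.expectation M Z
       + (real N * Q)^2"
    using intZ intZ2 by (simp add: Bochner_Integration.integral_add Bochner_Integration.integral_diff)
  also have "\<dots> \<le> real N * Q"
  proof -
    have e1: "2 * (real N * Q) * (real N * Q) = 2 * (real N * real N * Q^2)"
      and e2: "(real N * Q)^2 = real N * real N * Q^2" by (simp_all add: power2_eq_square)
    show ?thesis unfolding EZ e1 e2 using EZ2 by linarith
  qed
  finally show ?thesis .
qed

lemma rank_le_zero_rows:
  assumes "S \<in> carrier_mat N K"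
  shows "real (mrank N S) \<le> real N - (\<Sum>a<N. indicator (zrow K a) S)"
proof -
  define Zs where "Zs = {a \<in> {..<N}. S \<in> zrow K a}"
  have Zs_sub: "Zs \<subseteq> {..<N}" by (auto simp: Zs_def)
  have "mrank N S \<le> card ({..<N} - Zs)"
    by (rule rank_le_nonzero_rows[OF assms]) (auto simp: Zs_def zrow_def)
  moreover have "card ({..<N} - Zs) = N - card Zs"
    using Zs_sub by (simp add: card_Diff_subset finite_subset)
  moreover have "card Zs \<le> N" using card_mono[OF _ Zs_sub] by simp
  moreover have "(\<Sum>a<N. indicator (zrow K a) S) = (\<Sum>a\<in>Zs. 1::real)"
    by (rule sum.mono_neutral_cong_right) (auto simp: indicator_def Zs_def)
  ultimately show ?thesis by (simp add: of_nat_diff)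
qed

lemma Z_bounds:
  shows "0 \<le> (\<Sum>a<N. indicator (zrow K a) S :: real) \<and> (\<Sum>a<N. indicator (zrow K a) S :: real) \<le> real N"
proof -
  have "(\<Sum>a<N. indicator (zrow K a) S :: real) \<le> (\<Sum>a<N. 1)"
    by (intro sum_mono) (auto simp: indicator_def)
  moreover have "0 \<le> (\<Sum>a<N. indicator (zrow K a) S :: real)" by (intro sum_nonneg) auto
  ultimately show ?thesis by simp
qed

lemma main_bound:
  fixes K Nh Ns :: nat and \<beta> \<epsilon> :: real
  assumes "Ns \<ge> 1" "Nh \<ge> 1" "\<epsilon> > 0" "real K / real (Ns*Nh) < \<beta> + \<epsilon>"
    "(1-1/real Nh)^K > exp(- real Ns * \<beta>) - \<epsilon>/2"
  shows "measure_pmf.prob (seq_matrix_pmf Ns Nh K)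
     {S. real (mrank (Ns*Nh) S) / real (Ns*Nh) > min \<beta> (1 - exp(- real Ns * \<beta>)) + \<epsilon>}
     \<le> 4 / (\<epsilon>^2 * real (Ns*Nh))"
proof -
  define N where "N = Ns*Nh"
  define Q where "Q = (1-1/real Nh)^K"
  define M where "M = seq_matrix_pmf Ns Nh K"
  define Z where "Z = (\<lambda>S. (\<Sum>a<N. indicator (zrow K a) S :: real))"
  define e where "e = exp(- real Ns * \<beta>)"
  define E where "E = {S. real (mrank N S) / real N > min \<beta> (1 - e) + \<epsilon>}"
  define F where "F = (\<lambda>cs. mat N K (\<lambda>(i, j). cs j $ i) :: real mat)"
  define CH where "CH = Pi_pmf {..<K} (0\<^sub>v N) (\<lambda>_. seq_pmf Ns Nh)"
  have M_eq: "M = map_pmf F CH" by (simp add: M_def seq_matrix_pmf_def F_def CH_def N_def)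
  have carr: "F cs \<in> carrier_mat N K" for cs by (simp add: F_def)
  have Npos: "real N > 0" using assms by (simp add: N_def)
  have rankZ: "real (mrank N (F cs)) \<le> real N - Z (F cs)" for cs
    unfolding Z_def by (rule rank_le_zero_rows[OF carr])
  have rankK: "mrank N (F cs) \<le> K" for cs by (rule rank_le_cols[OF carr])
  have Q01: "0 \<le> Q" "Q \<le> 1" using assms(2) by (auto simp: Q_def intro!: power_le_one)
  have g0: "0 \<le> 4 / (\<epsilon>^2 * real N)" using Npos by simp
  have "measure_pmf.prob M E \<le> 4 / (\<epsilon>^2 * real N)"
  proof (cases "\<beta> \<le> 1 - e")
    case True
    have "F -` E = {}"
    proof (rule equals0I)
      fix cs assume "cs \<in> F -` E"
      then have "real (mrank N (F cs)) / real N > \<beta> + \<epsilon>" using True by (simp add: E_def)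
      moreover have "real (mrank N (F cs)) / real N \<le> real K / real N"
        using rankK[of cs] Npos by (simp add: divide_right_mono)
      ultimately show False using assms(4) unfolding N_def by linarith
    qed
    then have "measure_pmf.prob M E = 0" by (simp add: M_eq)
    then show ?thesis using g0 by simp
  next
    case False
    define E2 where "E2 = {S. (\<epsilon> * real N / 2)^2 \<le> (Z S - real N * Q)^2}"
    have sub: "F -` E \<subseteq> F -` E2"
    proof
      fix cs assume "cs \<in> F -` E"
      then have "real (mrank N (F cs)) / real N > 1 - e + \<epsilon>" using False by (simp add: E_def)
      then have "real (mrank N (F cs)) > (1 - e + \<epsilon>) * real N" using Npos by (simp add: pos_less_divide_eq)
      then have "Z (F cs) < real N * (e - \<epsilon>)" using rankZ[of cs] by (simp add: algebra_simps)
      moreover have "Q > e - \<epsilon>/2" using assms(5) by (simp add: Q_def e_def)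
      moreover have "real N * Q > real N * (e - \<epsilon>/2)"
        using Npos calculation(2) by (intro mult_strict_left_mono) auto
      moreover have "real N * (e - \<epsilon>/2) = real N * (e - \<epsilon>) + \<epsilon> * real N / 2"
        by (simp add: algebra_simps)
      ultimately have "real N * Q - Z (F cs) > \<epsilon> * real N / 2"
        by linarith
      then have "(\<epsilon> * real N / 2)^2 \<le> (real N * Q - Z (F cs))^2"
        using assms(3) Npos by (intro power_mono) auto
      then show "cs \<in> F -` E2" by (simp add: E2_def power2_commute)
    qed
    have "measure_pmf.prob M E = measure_pmf.prob CH (F -` E)" by (simp add: M_eq)
    also have "\<dots> \<le> measure_pmf.prob CH (F -` E2)"
      by (rule measure_pmf.finite_measure_mono[OF sub]) simp
    also have "\<dots> = measure_pmf.prob M E2" by (simp add: M_eq)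
    also have "\<dots> \<le> measure_pmf.expectation M (\<lambda>S. (Z S - real N * Q)^2) / (\<epsilon> * real N / 2)^2"
    proof -
      have bnd: "\<bar>(Z S - real N * Q)^2\<bar> \<le> real N ^ 2" for S
      proof -
        have "0 \<le> Z S" "Z S \<le> real N" using Z_bounds[where N=N and K=K and S=S] by (auto simp: Z_def)
        moreover have "0 \<le> real N * Q" "real N * Q \<le> real N" using Q01 Npos by (auto simp: mult_left_le)
        ultimately have "\<bar>Z S - real N * Q\<bar> \<le> real N" by linarith
        then have "\<bar>Z S - real N * Q\<bar>^2 \<le> real N ^ 2" by (intro power_mono) auto
        then show ?thesis by simp
      qed
      have intg: "integrable M (\<lambda>x. (Z x - real N * Q)^2)"
        by (rule int_bounded[where B="real N ^ 2"]) (rule bnd)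
      have cpos: "0 < (\<epsilon> * real N / 2)^2" using Npos assms(3) by simp
      have "measure M {x \<in> space M. (\<epsilon> * real N / 2)^2 \<le> (Z x - real N * Q)^2}
          \<le> (\<integral>x. (Z x - real N * Q)^2 \<partial>M) / (\<epsilon> * real N / 2)^2"
        by (rule integral_Markov_inequality_measure[OF intg _ _ cpos, where A=UNIV]) simp_all
      then show ?thesis by (simp add: E2_def)
    qed
    also have "\<dots> \<le> real N * Q / (\<epsilon> * real N / 2)^2"
      using second_moment[OF assms(1,2), where K=K] Npos assms(3)
      by (intro divide_right_mono) (auto simp: M_def Z_def N_def Q_def)
    also have "\<dots> \<le> real N / (\<epsilon> * real N / 2)^2"
      using Q01 Npos by (intro divide_right_mono) (auto simp: mult_left_le)
    also have "\<dots> = 4 / (\<epsilon>^2 * real N)"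
      using Npos assms(3) by (simp add: field_simps power2_eq_square)
    finally show ?thesis .
  qed
  then show ?thesis by (simp add: M_def E_def N_def e_def)
qed

lemma Q_limit:
  fixes K :: "nat \<Rightarrow> nat"
  assumes "Ns \<ge> 1" "(\<lambda>n. real (K n) / real (Ns * n)) \<longlonglongrightarrow> \<beta>"
  shows "(\<lambda>n. (1 - 1/real n)^(K n)) \<longlonglongrightarrow> exp (- real Ns * \<beta>)"
proof -
  have A: "(\<lambda>n::nat. real n * ln (1 - 1 / real n)) \<longlonglongrightarrow> -1" by real_asymp
  have B: "(\<lambda>n. real (K n) / real (Ns * n) * real Ns * (real n * ln (1 - 1 / real n)))
      \<longlonglongrightarrow> \<beta> * real Ns * (-1)"
    by (intro tendsto_mult tendsto_const assms(2) A)
  have C: "(\<lambda>n. exp (real (K n) / real (Ns * n) * real Ns * (real n * ln (1 - 1 / real n))))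
      \<longlonglongrightarrow> exp (\<beta> * real Ns * (-1))"
    by (rule tendsto_exp[OF B])
  have D: "eventually (\<lambda>n. exp (real (K n) / real (Ns * n) * real Ns * (real n * ln (1 - 1 / real n)))
      = (1 - 1/real n)^(K n)) sequentially"
    using eventually_ge_at_top[of "2::nat"]
  proof (rule eventually_mono)
    fix n :: nat assume n: "n \<ge> 2"
    then have "real n \<ge> 2" by simp
    then have "1/real n < 1" by (simp add: divide_less_eq)
    then have pos: "0 < 1 - 1/real n" by simp
    have e1: "real (K n) / real (Ns * n) * real Ns * (real n * ln (1 - 1 / real n))
        = real (K n) * ln (1 - 1 / real n)" using n assms(1) by (simp add: field_simps)
    have e2: "exp (real (K n) * ln (1 - 1/real n)) = (1 - 1/real n) powr real (K n)"
      using pos n by (simp add: powr_def mult.commute)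
    have e3: "(1 - 1/real n) powr real (K n) = (1-1/real n)^(K n)"
      using pos by (simp add: powr_realpow)
    show "exp (real (K n) / real (Ns * n) * real Ns * (real n * ln (1 - 1 / real n)))
      = (1 - 1/real n)^(K n)" by (simp only: e1 e2 e3)
  qed
  have "exp (\<beta> * real Ns * (-1)) = exp (- real Ns * \<beta>)" by (simp add: algebra_simps)
  then show ?thesis using Lim_transform_eventually[OF C D] by (simp add: mult.commute)
qed

theorem theorem2:
  fixes Ns :: nat and \<beta> :: real and K :: "nat \<Rightarrow> nat"
  assumes "Ns \<ge> 1"
    and "\<beta> > 0"
    and "\<And>Nh. Nh \<ge> 1 \<Longrightarrow> K Nh > 0"
    and "(\<lambda>Nh. real (K Nh) / real (Ns * Nh)) \<longlonglongrightarrow> \<beta>"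
  shows "\<And>\<epsilon>. \<epsilon> > 0 \<Longrightarrow>
    (\<lambda>Nh. measure_pmf.prob (seq_matrix_pmf Ns Nh (K Nh))
        {S. real (mrank (Ns * Nh) S) / real (Ns * Nh) > min \<beta> (1 - exp (- real Ns * \<beta>)) + \<epsilon>})
      \<longlonglongrightarrow> 0"
proof -
  fix \<epsilon> :: real assume eps: "\<epsilon> > 0"
  have ev1: "eventually (\<lambda>n. real (K n) / real (Ns * n) < \<beta> + \<epsilon>) sequentially"
    using order_tendstoD(2)[OF assms(4)] eps by simp
  have ev2: "eventually (\<lambda>n. (1 - 1/real n)^(K n) > exp (- real Ns * \<beta>) - \<epsilon>/2) sequentially"
    using order_tendstoD(1)[OF Q_limit[OF assms(1,4)]] eps by simp
  have ev: "eventually (\<lambda>n. measure_pmf.prob (seq_matrix_pmf Ns n (K n))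
        {S. real (mrank (Ns * n) S) / real (Ns * n) > min \<beta> (1 - exp (- real Ns * \<beta>)) + \<epsilon>}
      \<le> 4 / (\<epsilon>^2 * real (Ns*n))) sequentially"
    using eventually_conj[OF eventually_ge_at_top[of "1::nat"] eventually_conj[OF ev1 ev2]]
  proof (rule eventually_mono)
    fix n assume h: "1 \<le> n \<and> real (K n) / real (Ns * n) < \<beta> + \<epsilon> \<and>
       (1 - 1/real n)^(K n) > exp (- real Ns * \<beta>) - \<epsilon>/2"
    show "measure_pmf.prob (seq_matrix_pmf Ns n (K n))
        {S. real (mrank (Ns * n) S) / real (Ns * n) > min \<beta> (1 - exp (- real Ns * \<beta>)) + \<epsilon>}
      \<le> 4 / (\<epsilon>^2 * real (Ns*n))"
      using h by (intro main_bound[where Nh=n and K="K n" and Ns=Ns and \<beta>=\<beta> and \<epsilon>=\<epsilon>] assms(1) eps) auto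
  qed
  have gl: "(\<lambda>n. 4 / (\<epsilon>^2 * real (Ns*n))) \<longlonglongrightarrow> 0"
  proof -
    have "(\<lambda>n. 4 / (\<epsilon>^2 * real Ns) * inverse (real n)) \<longlonglongrightarrow> 0"
      by (rule tendsto_mult_right_zero[OF lim_inverse_n])
    moreover have "(\<lambda>n. 4 / (\<epsilon>^2 * real Ns) * inverse (real n)) = (\<lambda>n. 4 / (\<epsilon>^2 * real (Ns*n)))"
      by (rule ext) (simp add: field_simps)
    ultimately show ?thesis by simp
  qed
  show "(\<lambda>Nh. measure_pmf.prob (seq_matrix_pmf Ns Nh (K Nh))
        {S. real (mrank (Ns * Nh) S) / real (Ns * Nh) > min \<beta> (1 - exp (- real Ns * \<beta>)) + \<epsilon>})
      \<longlonglongrightarrow> 0"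
    by (rule tendsto_sandwich[OF _ ev tendsto_const gl]) simp
qed

end
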